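(* Let $\mathcal G=\langle V=V_{\mathrm{Min}}\uplus V_{\mathrm{Max}}, V_T, A, E, \omega\rangle$ be a finite weighted game and $c\colon V_T\to\mathbb Z$. Assume that the subgraph induced by $V\setminus V_T$ is strongly connected, that every cycle all of whose vertices lie in $V\setminus V_T$ has negative weight, and that no vertex has value $+\infty$ (with respect to $c$). Then a vertex $v\in V\setminus V_T$ has value $-\infty$ if and only if $v$ does not belong to the attractor of Max to $V_T$.
   Context: A weighted game has vertices $V$ partitioned into vertices of Min and of Max, targets $V_T\subseteq V_{\mathrm{Min}}$, alphabet $A$, edges $E\subseteq V\times A\times V$, weights $\omega\colon E\to\mathbb Z$, and is deadlock-free and deterministic (for each $(v,a)$ at most one $v'$ with $(v,a,v')\in E$). A cycle is a finite sequence of consecutive edges starting and ending at the same vertex (length $\ge 1$); its weight is the sum of its edge weights. A strategy of a player chooses, after each finite play ending in one of its vertices, a letter of an outgoing edge. With target values $c$, the weight of a play is $+\infty$ if it never visits $V_T$, and otherwise the sum of its edge weights up to the first visit of some $t\in V_T$ plus $c(t)$; the value of $v$ is $\inf_{\sigma_{\mathrm{Min}}}\sup_{\sigma_{\mathrm{Max}}}$ (equal to $\sup_{\sigma_{\mathrm{Max}}}\inf_{\sigma_{\mathrm{Min}}}$) of the weight of the outcome from $v$. The attractor of Max to $V_T$ is the set of vertices $v$ from which Max has a strategy such that every play from $v$ conforming to it visits $V_T$. *)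

theory Defs
  imports "HOL-Library.Extended_Real"
begin

record ('v, 'a) wgame =
  Vs    :: "'v set"
  VMin  :: "'v set"
  VMax  :: "'v set"
  VT    :: "'v set"
  Alph  :: "'a set"
  Edges :: "('v \<times> 'a \<times> 'v) set"
  wt    :: "'v \<times> 'a \<times> 'v \<Rightarrow> int"

type_synonym ('v, 'a) edge = "'v \<times> 'a \<times> 'v"

definition esrc :: "('v, 'a) edge \<Rightarrow> 'v" where "esrc e = fst e"
definition elet :: "('v, 'a) edge \<Rightarrow> 'a" where "elet e = fst (snd e)"
definition etgt :: "('v, 'a) edge \<Rightarrow> 'v" where "etgt e = snd (snd e)"

definition finite_wgame :: "('v, 'a) wgame \<Rightarrow> bool" where
  "finite_wgame G \<longleftrightarrow>
     finite (Vs G) \<and> finite (Alph G) \<and>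
     VMin G \<union> VMax G = Vs G \<and> VMin G \<inter> VMax G = {} \<and>
     VT G \<subseteq> VMin G \<and>
     Edges G \<subseteq> Vs G \<times> Alph G \<times> Vs G \<and>
     (\<forall>v\<in>Vs G. \<exists>a v'. (v, a, v') \<in> Edges G) \<and>
     (\<forall>v a v1 v2. (v, a, v1) \<in> Edges G \<longrightarrow> (v, a, v2) \<in> Edges G \<longrightarrow> v1 = v2)"

text \<open>Finite plays (histories): a start vertex and a list of consecutive edges.\<close>
definition hlast :: "'v \<Rightarrow> ('v, 'a) edge list \<Rightarrow> 'v" where
  "hlast v0 es = (if es = [] then v0 else etgt (last es))"

fun is_path :: "('v, 'a) wgame \<Rightarrow> 'v \<Rightarrow> ('v, 'a) edge list \<Rightarrow> bool" where
  "is_path G v [] \<longleftrightarrow> v \<in> Vs G"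
| "is_path G v (e # es) \<longleftrightarrow> e \<in> Edges G \<and> esrc e = v \<and> is_path G (etgt e) es"

type_synonym ('v, 'a) strategy = "'v \<times> ('v, 'a) edge list \<Rightarrow> 'a"

definition valid_strategy :: "('v, 'a) wgame \<Rightarrow> 'v set \<Rightarrow> ('v, 'a) strategy \<Rightarrow> bool" where
  "valid_strategy G P \<sigma> \<longleftrightarrow>
     (\<forall>v0 es. is_path G v0 es \<longrightarrow> hlast v0 es \<in> P \<longrightarrow>
        (\<exists>v'. (hlast v0 es, \<sigma> (v0, es), v') \<in> Edges G))"

definition is_play :: "('v, 'a) wgame \<Rightarrow> 'v \<Rightarrow> (nat \<Rightarrow> ('v, 'a) edge) \<Rightarrow> bool" where
  "is_play G v p \<longleftrightarrow> esrc (p 0) = v \<and> (\<forall>i. p i \<in> Edges G \<and> etgt (p i) = esrc (p (Suc i)))"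

definition conforms :: "'v set \<Rightarrow> ('v, 'a) strategy \<Rightarrow> 'v \<Rightarrow> (nat \<Rightarrow> ('v, 'a) edge) \<Rightarrow> bool" where
  "conforms P \<sigma> v p \<longleftrightarrow> (\<forall>i. esrc (p i) \<in> P \<longrightarrow> elet (p i) = \<sigma> (v, map p [0..<i]))"

fun out_prefix :: "('v, 'a) wgame \<Rightarrow> ('v, 'a) strategy \<Rightarrow> ('v, 'a) strategy \<Rightarrow> 'v \<Rightarrow> nat
                   \<Rightarrow> ('v, 'a) edge list" where
  "out_prefix G sm sM v 0 = []"
| "out_prefix G sm sM v (Suc n) =
     (let es = out_prefix G sm sM v n;
          u = hlast v es;
          a = (if u \<in> VMin G then sm (v, es) else sM (v, es))
      in es @ [(u, a, THE v'. (u, a, v') \<in> Edges G)])"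

definition outcome :: "('v, 'a) wgame \<Rightarrow> ('v, 'a) strategy \<Rightarrow> ('v, 'a) strategy \<Rightarrow> 'v
                      \<Rightarrow> nat \<Rightarrow> ('v, 'a) edge" where
  "outcome G sm sM v i = out_prefix G sm sM v (Suc i) ! i"

definition play_weight :: "('v, 'a) wgame \<Rightarrow> ('v \<Rightarrow> int) \<Rightarrow> (nat \<Rightarrow> ('v, 'a) edge) \<Rightarrow> ereal" where
  "play_weight G c p =
     (if \<exists>i. esrc (p i) \<in> VT G
      then (let k = (LEAST i. esrc (p i) \<in> VT G)
            in ereal (of_int ((\<Sum>i<k. wt G (p i)) + c (esrc (p k)))))
      else \<infinity>)"

definition game_value :: "('v, 'a) wgame \<Rightarrow> ('v \<Rightarrow> int) \<Rightarrow> 'v \<Rightarrow> ereal" where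
  "game_value G c v =
     (INF sm \<in> {s. valid_strategy G (VMin G) s}.
        SUP sM \<in> {s. valid_strategy G (VMax G) s}. play_weight G c (outcome G sm sM v))"

definition max_attractor :: "('v, 'a) wgame \<Rightarrow> 'v set" where
  "max_attractor G = {v \<in> Vs G. \<exists>sM. valid_strategy G (VMax G) sM \<and>
      (\<forall>p. is_play G v p \<longrightarrow> conforms (VMax G) sM v p \<longrightarrow> (\<exists>i. esrc (p i) \<in> VT G))}"

definition nt_edge_rel :: "('v, 'a) wgame \<Rightarrow> ('v \<times> 'v) set" where
  "nt_edge_rel G = {(x, y). x \<in> Vs G - VT G \<and> y \<in> Vs G - VT G \<and> (\<exists>a. (x, a, y) \<in> Edges G)}"

definition nontarget_strongly_connected :: "('v, 'a) wgame \<Rightarrow> bool" where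
  "nontarget_strongly_connected G \<longleftrightarrow>
     (\<forall>u\<in>Vs G - VT G. \<forall>w\<in>Vs G - VT G. (u, w) \<in> (nt_edge_rel G)\<^sup>*)"

definition is_cycle :: "('v, 'a) wgame \<Rightarrow> ('v, 'a) edge list \<Rightarrow> bool" where
  "is_cycle G es \<longleftrightarrow> es \<noteq> [] \<and> set es \<subseteq> Edges G \<and>
     (\<forall>i. Suc i < length es \<longrightarrow> etgt (es ! i) = esrc (es ! Suc i)) \<and>
     etgt (last es) = esrc (hd es)"

definition cycle_weight :: "('v, 'a) wgame \<Rightarrow> ('v, 'a) edge list \<Rightarrow> int" where
  "cycle_weight G es = sum_list (map (wt G) es)"

definition nontarget_cycles_negative :: "('v, 'a) wgame \<Rightarrow> bool" where
  "nontarget_cycles_negative G \<longleftrightarrow>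
     (\<forall>es. is_cycle G es \<longrightarrow> (\<forall>e\<in>set es. esrc e \<notin> VT G \<and> etgt e \<notin> VT G)
           \<longrightarrow> cycle_weight G es < 0)"

end

theory Submission imports Defs begin

lemma edge_split: "e = (esrc e, elet e, etgt e)"
  by (simp add: esrc_def elet_def etgt_def)

lemma edge_sel[simp]: "esrc (x,a,y) = x" "elet (x,a,y) = a" "etgt (x,a,y) = y"
  by (simp_all add: esrc_def elet_def etgt_def)

lemma hlast_Nil[simp]: "hlast v [] = v" by (simp add: hlast_def)
lemma hlast_Cons[simp]: "hlast v (e # es) = hlast (etgt e) es"
  by (simp add: hlast_def)
lemma hlast_append: "hlast v (xs @ ys) = hlast (hlast v xs) ys"
  by (induction xs arbitrary: v) auto
lemma hlast_snoc[simp]: "hlast v (xs @ [e]) = etgt e"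
  by (simp add: hlast_append)

lemma is_path_hlast: "is_path G v es \<Longrightarrow> hlast v es \<in> Vs G"
  by (induction es arbitrary: v) auto

lemma length_out_prefix[simp]: "length (out_prefix G sm sM v n) = n"
  by (induction n) (auto simp: Let_def)

lemma out_prefix_nth: "i < n \<Longrightarrow> out_prefix G sm sM v n ! i = outcome G sm sM v i"
proof (induction n)
  case 0 then show ?case by simp
next
  case (Suc n)
  show ?case
  proof (cases "i < n")
    case True
    then show ?thesis using Suc by (simp add: Let_def nth_append)
  next
    case False
    then have "i = n" using Suc by simp
    then show ?thesis by (simp add: outcome_def)
  qed
qed

lemma out_prefix_map: "out_prefix G sm sM v n = map (outcome G sm sM v) [0..<n]"
  by (rule nth_equalityI) (auto simp: out_prefix_nth)

lemma outcome_eq: "outcome G sm sM v i =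
   (let es = map (outcome G sm sM v) [0..<i]; u = hlast v es;
        a = (if u \<in> VMin G then sm (v, es) else sM (v, es))
    in (u, a, THE v'. (u, a, v') \<in> Edges G))"
  apply (subst (1) outcome_def)
  apply (simp only: out_prefix.simps(2))
  apply (simp add: Let_def nth_append out_prefix_map)
  done

inductive attr :: "('v,'a) wgame \<Rightarrow> nat \<Rightarrow> 'v \<Rightarrow> bool" for G where
  base: "v \<in> VT G \<Longrightarrow> attr G n v"
| maxs: "v \<in> VMax G \<Longrightarrow> (v, a, w) \<in> Edges G \<Longrightarrow> attr G n w \<Longrightarrow> attr G (Suc n) v"
| mins: "v \<in> VMin G \<Longrightarrow> v \<in> Vs G \<Longrightarrow> (\<forall>a w. (v, a, w) \<in> Edges G \<longrightarrow> attr G n w) \<Longrightarrow> attr G (Suc n) v"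
| up: "attr G n v \<Longrightarrow> attr G (Suc n) v"

lemma attr_mono: "attr G n v \<Longrightarrow> n \<le> m \<Longrightarrow> attr G m v"
proof (induction m)
  case 0 then show ?case by simp
next
  case (Suc m) then show ?case by (metis attr.up le_Suc_eq)
qed

lemma attr0: "attr G 0 v \<Longrightarrow> v \<in> VT G"
  by (cases rule: attr.cases) auto

lemma play_hlast: "is_play G v p \<Longrightarrow> hlast v (map p [0..<i]) = esrc (p i)"
  by (induction i) (auto simp: is_play_def)

lemma path_consec: "is_path G u es \<Longrightarrow> Suc i < length es \<Longrightarrow> etgt (es!i) = esrc (es ! Suc i)"
proof (induction es arbitrary: u i)
  case Nil then show ?case by simp
next
  case (Cons e es)
  show ?case
  proof (cases i)
    case 0
    then obtain e2 es2 where "es = e2 # es2" using Cons by (cases es) auto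
    then show ?thesis using Cons 0 by simp
  next
    case (Suc k)
    then show ?thesis using Cons.IH[of "etgt e" k] Cons.prems by simp
  qed
qed

lemma path_edges: "is_path G u es \<Longrightarrow> set es \<subseteq> Edges G"
  by (induction es arbitrary: u) auto

lemma hlast_last: "es \<noteq> [] \<Longrightarrow> hlast v es = etgt (last es)"
  by (simp add: hlast_def)

lemma path_cycle: "is_path G w ys \<Longrightarrow> ys \<noteq> [] \<Longrightarrow> hlast w ys = w \<Longrightarrow> is_cycle G ys"
proof -
  assume p: "is_path G w ys" and ne: "ys \<noteq> []" and h: "hlast w ys = w"
  have hd: "esrc (hd ys) = w" using p ne by (cases ys) auto
  show "is_cycle G ys"
    unfolding is_cycle_def
  proof (intro conjI allI impI)
    show "ys \<noteq> []" by (rule ne)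
    show "set ys \<subseteq> Edges G" using p by (rule path_edges)
    fix i assume "Suc i < length ys"
    then show "etgt (ys ! i) = esrc (ys ! Suc i)" using p by (intro path_consec)
  next
    show "etgt (last ys) = esrc (hd ys)" using h hd hlast_last[OF ne, of w] by simp
  qed
qed

lemma sum_list_le: "(\<forall>x\<in>set xs. f x \<le> (W::int)) \<Longrightarrow> sum_list (map f xs) \<le> int (length xs) * W"
  by (induction xs) (auto simp: algebra_simps)

lemma sum_shift: fixes f :: "nat \<Rightarrow> int" shows "(\<Sum>i<k+n. f i) = (\<Sum>i<n. f i) + (\<Sum>i<k. f (i+n))"
  by (induction k) (auto simp: algebra_simps)

lemma ereal_split3: "ereal (of_int (a + b + d)) = ereal (of_int a) + ereal (of_int (b + d))"
  by simp

lemma pw_shift: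
  assumes "\<forall>i<n. esrc (p i) \<notin> VT G"
  shows "play_weight G c p = ereal (of_int (\<Sum>i<n. wt G (p i))) + play_weight G c (\<lambda>i. p (i+n))"
proof (cases "\<exists>i. esrc (p i) \<in> VT G")
  case True
  then obtain i where i: "esrc (p i) \<in> VT G" by blast
  then have ni: "n \<le> i" using assms not_less by blast
  have ex2: "\<exists>i. esrc (p (i+n)) \<in> VT G" using i ni by (metis le_add_diff_inverse2)
  define k where "k = (LEAST i. esrc (p (i+n)) \<in> VT G)"
  have k1: "esrc (p (k+n)) \<in> VT G" unfolding k_def using ex2 by (rule LeastI_ex)
  have L: "(LEAST i. esrc (p i) \<in> VT G) = k + n"
  proof (rule Least_equality)
    show "esrc (p (k+n)) \<in> VT G" by (rule k1)
    fix m assume m: "esrc (p m) \<in> VT G"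
    then have nm: "n \<le> m" using assms not_less by blast
    then have "k \<le> m - n" unfolding k_def using m by (intro Least_le) simp
    then show "k + n \<le> m" using nm by simp
  qed
  have A: "play_weight G c p = ereal (of_int ((\<Sum>i<k+n. wt G (p i)) + c (esrc (p (k+n)))))"
    unfolding play_weight_def Let_def L by (simp only: if_P[OF True])
  have B: "play_weight G c (\<lambda>i. p (i+n)) = ereal (of_int ((\<Sum>i<k. wt G (p (i+n))) + c (esrc (p (k+n)))))"
    unfolding play_weight_def Let_def k_def[symmetric] by (simp only: if_P[OF ex2])
  show ?thesis unfolding A B sum_shift[where n=n and k=k and f="\<lambda>i. wt G (p i)"]
    by (rule ereal_split3)
next
  case False
  then have "\<not> (\<exists>i. esrc (p (i+n)) \<in> VT G)" by blast
  then show ?thesis using False unfolding play_weight_def by simp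
qed

locale wg = fixes G :: "('v,'a) wgame" assumes fin: "finite_wgame G"
begin

lemma finVs: "finite (Vs G)" and finA: "finite (Alph G)"
  and union: "VMin G \<union> VMax G = Vs G" and disj: "VMin G \<inter> VMax G = {}"
  and VTmin: "VT G \<subseteq> VMin G" and Esub: "Edges G \<subseteq> Vs G \<times> Alph G \<times> Vs G"
  and dlf: "\<And>v. v \<in> Vs G \<Longrightarrow> \<exists>a v'. (v,a,v') \<in> Edges G"
  and det: "\<And>v a v1 v2. (v,a,v1) \<in> Edges G \<Longrightarrow> (v,a,v2) \<in> Edges G \<Longrightarrow> v1 = v2"
  using fin unfolding finite_wgame_def by blast+

lemma finE: "finite (Edges G)"
  using Esub finVs finA by (meson finite_SigmaI finite_subset)

lemma edge_Vs: "(x,a,y) \<in> Edges G \<Longrightarrow> x \<in> Vs G \<and> y \<in> Vs G"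
  using Esub by auto

lemma is_path_append: "is_path G v (xs @ ys) \<longleftrightarrow> is_path G v xs \<and> is_path G (hlast v xs) ys"
proof (induction xs arbitrary: v)
  case Nil
  then show ?case
    by (cases ys) (auto dest: edge_Vs)
next
  case (Cons a xs)
  then show ?case by auto
qed


lemma the_edge: "(u,a,w) \<in> Edges G \<Longrightarrow> (THE v'. (u,a,v') \<in> Edges G) = w"
  using det by blast

lemma outcome_path:
  assumes sm: "valid_strategy G (VMin G) sm" and sM: "valid_strategy G (VMax G) sM"
    and v: "v \<in> Vs G"
  shows "is_path G v (out_prefix G sm sM v n)"
proof (induction n)
  case 0 then show ?case using v by simp
next
  case (Suc n)
  define es where "es = out_prefix G sm sM v n"
  define u where "u = hlast v es"
  define a where "a = (if u \<in> VMin G then sm (v, es) else sM (v, es))"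
  have pe: "is_path G v es" using Suc es_def by simp
  have "u \<in> Vs G" using is_path_hlast[OF pe] u_def by simp
  then have "\<exists>w. (u,a,w) \<in> Edges G"
    using sm sM pe union unfolding valid_strategy_def a_def u_def by auto
  then obtain w where w: "(u,a,w) \<in> Edges G" by blast
  have eq: "out_prefix G sm sM v (Suc n) = es @ [(u,a,w)]"
  proof -
    have "out_prefix G sm sM v (Suc n) = es @ [(u,a,THE v'. (u,a,v') \<in> Edges G)]"
      by (simp add: Let_def es_def u_def a_def)
    then show ?thesis using the_edge[OF w] by simp
  qed
  show ?case unfolding eq is_path_append using pe w edge_Vs[OF w]
    by (simp add: u_def)
qed

lemma outcome_props:
  assumes sm: "valid_strategy G (VMin G) sm" and sM: "valid_strategy G (VMax G) sM"
    and v: "v \<in> Vs G"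
  shows "is_play G v (outcome G sm sM v)"
    "conforms (VMin G) sm v (outcome G sm sM v)"
    "conforms (VMax G) sM v (outcome G sm sM v)"
proof -
  let ?p = "outcome G sm sM v"
  have pth: "\<And>n. is_path G v (map ?p [0..<n])"
    using outcome_path[OF sm sM v] by (simp add: out_prefix_map)
  have src: "esrc (?p i) = hlast v (map ?p [0..<i])" for i
    using outcome_eq[of G sm sM v i] by (simp add: Let_def)
  have inE: "?p i \<in> Edges G" for i
    using pth[of "Suc i"] by (simp add: is_path_append)
  show "is_play G v ?p"
    unfolding is_play_def
  proof (intro conjI allI)
    show "esrc (?p 0) = v" using src[of 0] by simp
    fix i show "?p i \<in> Edges G" by (rule inE)
    show "etgt (?p i) = esrc (?p (Suc i))" using src[of "Suc i"] by simp
  qed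
  show "conforms (VMin G) sm v ?p"
    unfolding conforms_def
  proof (intro allI impI)
    fix i assume "esrc (?p i) \<in> VMin G"
    then show "elet (?p i) = sm (v, map ?p [0..<i])"
      using outcome_eq[of G sm sM v i] src[of i] by (simp add: Let_def)
  qed
  show "conforms (VMax G) sM v ?p"
    unfolding conforms_def using disj
  proof (intro allI impI)
    fix i assume "esrc (?p i) \<in> VMax G"
    then show "elet (?p i) = sM (v, map ?p [0..<i])"
      using outcome_eq[of G sm sM v i] src[of i] disj by (auto simp add: Let_def)
  qed
qed

lemma outcome_unique:
  assumes pl: "is_play G v p" and c1: "conforms (VMin G) sm v p"
    and c2: "conforms (VMax G) sM v p"
  shows "p = outcome G sm sM v"
proof -
  have "\<forall>i<n. p i = outcome G sm sM v i" for n
  proof (induction n)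
    case 0 then show ?case by simp
  next
    case (Suc n)
    have m: "map p [0..<n] = map (outcome G sm sM v) [0..<n]" using Suc by simp
    have srcp: "esrc (p n) = hlast v (map p [0..<n])"
    proof (cases n)
      case 0 then show ?thesis using pl by (simp add: is_play_def)
    next
      case (Suc m) then show ?thesis using pl by (simp add: is_play_def)
    qed
    have pe: "p n \<in> Edges G" using pl by (simp add: is_play_def)
    have sV: "esrc (p n) \<in> Vs G" using edge_Vs[of "esrc (p n)" "elet (p n)" "etgt (p n)"] pe edge_split[of "p n"] by auto
    have let_: "elet (p n) = (if esrc (p n) \<in> VMin G then sm (v, map p [0..<n]) else sM (v, map p [0..<n]))"
      using c1 c2 sV union unfolding conforms_def by auto
    have "p n = outcome G sm sM v n"
      apply (subst outcome_eq[of G sm sM v n])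
      apply (simp add: Let_def m[symmetric] srcp[symmetric] let_[symmetric])
      using the_edge[of "esrc (p n)" "elet (p n)" "etgt (p n)"] pe edge_split[of "p n"]
      by (metis edge_split)
    then show ?case using Suc by (auto simp: less_Suc_eq)
  qed
  then show ?thesis by auto
qed


definition R where "R = {v \<in> Vs G. \<exists>n. attr G n v}"
definition T where "T = Vs G - R"

lemma VT_R: "VT G \<subseteq> R"
  using VTmin union unfolding R_def by (auto intro: attr.base)

lemma T_VT: "x \<in> T \<Longrightarrow> x \<notin> VT G" using VT_R unfolding T_def by auto

lemma trap_max: "x \<in> VMax G \<Longrightarrow> x \<in> T \<Longrightarrow> (x,a,y) \<in> Edges G \<Longrightarrow> y \<in> T"
  unfolding T_def R_def using edge_Vs[of x a y] by (auto intro: attr.maxs)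

lemma trap_min: assumes "x \<in> VMin G" "x \<in> T" shows "\<exists>a y. (x,a,y) \<in> Edges G \<and> y \<in> T"
proof (rule ccontr)
  assume neg0: "\<not> ?thesis"
  then have allR: "\<forall>e \<in> Edges G. esrc e = x \<longrightarrow> (\<exists>n. attr G n (etgt e))"
  proof (intro ballI impI)
    fix e assume e: "e \<in> Edges G" "esrc e = x"
    then have e': "(x, elet e, etgt e) \<in> Edges G" by (metis edge_split)
    show "\<exists>n. attr G n (etgt e)"
    proof (rule ccontr)
      assume "\<nexists>n. attr G n (etgt e)"
      then have "etgt e \<in> T" using edge_Vs[OF e'] unfolding T_def R_def by auto
      then show False using neg0 e' by blast
    qed
  qed
  define f where "f e = (LEAST n. attr G n (etgt (e::'v \<times> 'a \<times> 'v)))" for e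
  define N where "N = Max (f ` Edges G)"
  have "\<forall>a w. (x,a,w) \<in> Edges G \<longrightarrow> attr G N w"
  proof (intro allI impI)
    fix a w assume e: "(x,a,w) \<in> Edges G"
    then obtain n where "attr G n w" using allR by fastforce
    then have "attr G (f (x,a,w)) w" unfolding f_def by (simp add: LeastI[where P="\<lambda>n. attr G n w"])
    moreover have "f (x,a,w) \<le> N" unfolding N_def using e finE by simp
    ultimately show "attr G N w" by (rule attr_mono)
  qed
  then have "attr G (Suc N) x" using assms union unfolding T_def by (intro attr.mins) auto
  then show False using assms unfolding T_def R_def by auto
qed

definition trl where "trl x = (SOME a. \<exists>y. (x,a,y) \<in> Edges G \<and> (x \<in> T \<longrightarrow> y \<in> T))"

lemma trl_ok: assumes "x \<in> VMin G" shows "\<exists>y. (x, trl x, y) \<in> Edges G \<and> (x \<in> T \<longrightarrow> y \<in> T)"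
proof -
  have "\<exists>a y. (x,a,y) \<in> Edges G \<and> (x \<in> T \<longrightarrow> y \<in> T)"
    using trap_min[OF assms] dlf[of x] assms union by blast
  then show ?thesis unfolding trl_def by (rule someI_ex[where P = "\<lambda>a. \<exists>y. _ a y"])
qed

lemma trap_play:
  assumes pl: "is_play G v p" and v: "v \<in> T"
    and cf: "\<forall>i<n. esrc (p i) \<in> VMin G \<longrightarrow> elet (p i) = trl (esrc (p i))"
  shows "i \<le> n \<Longrightarrow> esrc (p i) \<in> T"
proof (induction i)
  case 0 then show ?case using pl v by (simp add: is_play_def)
next
  case (Suc i)
  let ?x = "esrc (p i)"
  have x: "?x \<in> T" using Suc by simp
  have pe: "p i \<in> Edges G" and nx: "etgt (p i) = esrc (p (Suc i))" using pl by (auto simp: is_play_def)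
  have e: "(?x, elet (p i), etgt (p i)) \<in> Edges G" using pe by (metis edge_split)
  have "?x \<in> Vs G" using x unfolding T_def by simp
  then consider "?x \<in> VMin G" | "?x \<in> VMax G" using union by blast
  then show ?case
  proof cases
    case 1
    then have "elet (p i) = trl ?x" using cf Suc by simp
    then show ?thesis using trl_ok[OF 1] x e det nx by metis
  next
    case 2 then show ?thesis using trap_max[OF 2 x e] nx by simp
  qed
qed

definition rk where "rk x = (LEAST n. attr G n x)"

definition sigl where "sigl x = (SOME a. \<exists>w. (x,a,w) \<in> Edges G \<and> (x \<in> R - VT G \<longrightarrow> attr G (rk x - 1) w))"

lemma rk_attr: "x \<in> R \<Longrightarrow> attr G (rk x) x"
  unfolding R_def rk_def by (auto intro: LeastI)

lemma rk_pos: assumes "x \<in> R" "x \<notin> VT G" shows "\<exists>m. rk x = Suc m"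
proof (cases "rk x")
  case 0
  then have "attr G 0 x" using rk_attr[OF assms(1)] by simp
  then have "x \<in> VT G" by (rule attr0)
  with assms(2) show ?thesis by simp
qed auto

lemma sigl_ok: assumes "x \<in> VMax G"
  shows "\<exists>w. (x, sigl x, w) \<in> Edges G \<and> (x \<in> R - VT G \<longrightarrow> attr G (rk x - 1) w)"
proof -
  have "\<exists>a w. (x,a,w) \<in> Edges G \<and> (x \<in> R - VT G \<longrightarrow> attr G (rk x - 1) w)"
  proof (cases "x \<in> R - VT G")
    case True
    then obtain m where m: "rk x = Suc m" using rk_pos by blast
    have "attr G (Suc m) x" using rk_attr[of x] True m by auto
    then have "\<exists>a w. (x,a,w) \<in> Edges G \<and> attr G m w"
    proof (cases rule: attr.cases)
      case base then show ?thesis using True by simp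
    next
      case (maxs a w) then show ?thesis by blast
    next
      case mins then show ?thesis using assms disj by blast
    next
      case up
      then have "rk x \<le> m" unfolding rk_def by (rule Least_le)
      then show ?thesis using m by simp
    qed
    then show ?thesis using m by auto
  next
    case False
    then show ?thesis using dlf[of x] assms union by blast
  qed
  then show ?thesis unfolding sigl_def by (rule someI_ex[where P = "\<lambda>a. \<exists>w. _ a w"])
qed

lemma rank_step:
  assumes x: "x \<in> R" "x \<notin> VT G" and e: "(x,a,y) \<in> Edges G"
    and s: "x \<in> VMax G \<Longrightarrow> a = sigl x"
  shows "y \<in> R \<and> rk y < rk x"
proof -
  obtain m where m: "rk x = Suc m" using rk_pos[OF x] by blast
  have "attr G (Suc m) x" using rk_attr[of x] x m by auto
  then have "attr G m y"
  proof (cases rule: attr.cases)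
    case base then show ?thesis using x by simp
  next
    case (maxs a' w)
    then obtain w' where "(x, sigl x, w') \<in> Edges G" "attr G m w'"
      using sigl_ok[of x] x m by auto
    then show ?thesis using s maxs e det by metis
  next
    case mins then show ?thesis using e by blast
  next
    case up
    then have "rk x \<le> m" unfolding rk_def by (rule Least_le)
    then show ?thesis using m by simp
  qed
  moreover have "y \<in> Vs G" using edge_Vs[OF e] by simp
  ultimately show ?thesis using m unfolding R_def rk_def
    by (auto intro: Least_le le_less_trans)
qed

lemma rank_play:
  assumes pl: "is_play G v p" and v: "v \<in> R"
    and cf: "conforms (VMax G) (\<lambda>(v0,es). sigl (hlast v0 es)) v p"
  shows "\<exists>i\<le>rk v. esrc (p i) \<in> VT G"
proof -
  have main: "(\<forall>j<i. esrc (p j) \<notin> VT G) \<longrightarrow> esrc (p i) \<in> R \<and> rk (esrc (p i)) + i \<le> rk v" for i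
  proof (induction i)
    case 0 then show ?case using pl v by (simp add: is_play_def)
  next
    case (Suc i)
    show ?case
    proof
      assume nv: "\<forall>j<Suc i. esrc (p j) \<notin> VT G"
      let ?x = "esrc (p i)"
      have x: "?x \<in> R" "rk ?x + i \<le> rk v" using Suc nv by auto
      have pe: "p i \<in> Edges G" and nx: "etgt (p i) = esrc (p (Suc i))" using pl by (auto simp: is_play_def)
      have e: "(?x, elet (p i), etgt (p i)) \<in> Edges G" using pe by (metis edge_split)
      have s: "?x \<in> VMax G \<Longrightarrow> elet (p i) = sigl ?x"
        using cf play_hlast[OF pl, of i] unfolding conforms_def by auto
      have "etgt (p i) \<in> R \<and> rk (etgt (p i)) < rk ?x"
        using rank_step[OF x(1) _ e s] nv by auto
      then show "esrc (p (Suc i)) \<in> R \<and> rk (esrc (p (Suc i))) + Suc i \<le> rk v"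
        using x nx by auto
    qed
  qed
  show ?thesis
  proof (rule ccontr)
    assume "\<not> ?thesis"
    then have "\<forall>j<rk v. esrc (p j) \<notin> VT G" "esrc (p (rk v)) \<notin> VT G" by auto
    then have "esrc (p (rk v)) \<in> R" "rk (esrc (p (rk v))) = 0" using main[of "rk v"] by auto
    then show False using rk_attr attr0 \<open>esrc (p (rk v)) \<notin> VT G\<close> by fastforce
  qed
qed

definition sig where "sig = (\<lambda>(v0,es). sigl (hlast v0 es))"
definition trs where "trs = (\<lambda>(v0,es). trl (hlast v0 es))"

lemma sig_valid: "valid_strategy G (VMax G) sig"
  unfolding valid_strategy_def sig_def using sigl_ok by auto

lemma trs_valid: "valid_strategy G (VMin G) trs"
  unfolding valid_strategy_def trs_def using trl_ok by auto

lemma attractor_R: "max_attractor G = R"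
proof
  show "R \<subseteq> max_attractor G"
  proof
    fix v assume v: "v \<in> R"
    then have "v \<in> Vs G" unfolding R_def by simp
    moreover have "\<forall>p. is_play G v p \<longrightarrow> conforms (VMax G) sig v p \<longrightarrow> (\<exists>i. esrc (p i) \<in> VT G)"
      using rank_play[OF _ v] unfolding sig_def by blast
    ultimately show "v \<in> max_attractor G" unfolding max_attractor_def using sig_valid by blast
  qed
next
  show "max_attractor G \<subseteq> R"
  proof
    fix v assume v: "v \<in> max_attractor G"
    then obtain sM where sM: "valid_strategy G (VMax G) sM" and vV: "v \<in> Vs G"
      and h: "\<forall>p. is_play G v p \<longrightarrow> conforms (VMax G) sM v p \<longrightarrow> (\<exists>i. esrc (p i) \<in> VT G)"
      unfolding max_attractor_def by blast
    show "v \<in> R"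
    proof (rule ccontr)
      assume "v \<notin> R"
      then have vT: "v \<in> T" using vV unfolding T_def by simp
      let ?p = "outcome G trs sM v"
      note op = outcome_props[OF trs_valid sM vV]
      obtain i where "esrc (?p i) \<in> VT G" using h op by blast
      moreover have "esrc (?p i) \<in> T"
      proof (rule trap_play[OF op(1) vT, of i])
        show "\<forall>j<i. esrc (?p j) \<in> VMin G \<longrightarrow> elet (?p j) = trl (esrc (?p j))"
          using op(2) play_hlast[OF op(1)] unfolding conforms_def trs_def by auto
      qed simp
      ultimately show False using T_VT by blast
    qed
  qed
qed


definition Wm where "Wm = Max (insert 0 ((\<lambda>e. \<bar>wt G e\<bar>) ` Edges G))"

lemma Wm: "e \<in> Edges G \<Longrightarrow> \<bar>wt G e\<bar> \<le> Wm" "0 \<le> Wm"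
  unfolding Wm_def using finE by auto

lemma path_weight:
  assumes neg: "nontarget_cycles_negative G"
  shows "is_path G u es \<Longrightarrow> (\<forall>e\<in>set es. esrc e \<notin> VT G \<and> etgt e \<notin> VT G) \<Longrightarrow>
    int (card (Vs G)) * sum_list (map (wt G) es) + int (length es)
      \<le> int (card (Vs G)) * int (card (Vs G)) * Wm + int (card (Vs G))"
proof (induction "length es" arbitrary: u es rule: less_induct)
  case less
  define n where "n = card (Vs G)"
  show ?case
  proof (cases "length es \<le> n")
    case True
    have "sum_list (map (wt G) es) \<le> int (length es) * Wm"
      using path_edges[OF less.prems(1)] Wm by (intro sum_list_le) (auto simp: abs_le_iff)
    also have "\<dots> \<le> int n * Wm" using True Wm(2) by (simp add: mult_right_mono)
    finally have "int n * sum_list (map (wt G) es) \<le> int n * (int n * Wm)" by (simp add: mult_left_mono)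
    then show ?thesis using True unfolding n_def[symmetric] by (simp add: algebra_simps)
  next
    case False
    define pos where "pos i = hlast u (take i es)" for i
    have posV: "pos i \<in> Vs G" for i
      using less.prems(1) unfolding pos_def
      by (metis append_take_drop_id is_path_append is_path_hlast)
    have "\<not> inj_on pos {0..n}"
    proof
      assume "inj_on pos {0..n}"
      then have "card (pos ` {0..n}) = n + 1" by (simp add: card_image)
      moreover have "card (pos ` {0..n}) \<le> n" unfolding n_def using posV finVs by (intro card_mono) auto
      ultimately show False by simp
    qed
    then obtain x y where xy: "x \<le> n" "y \<le> n" "x \<noteq> y" "pos x = pos y"
      unfolding inj_on_def by auto
    obtain i j where ij: "i < j" "j \<le> n" "pos i = pos j"
    proof (cases "x < y")
      case True then show ?thesis using that xy by blast
    next
      case False then show ?thesis using that[of y x] xy by auto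
    qed
    define xs where "xs = take i es"
    define ys where "ys = take (j - i) (drop i es)"
    define zs where "zs = drop j es"
    have "zs = drop (j - i) (drop i es)" using ij by (simp add: zs_def)
    then have "ys @ zs = drop i es" by (metis append_take_drop_id ys_def)
    then have es: "es = xs @ ys @ zs" by (simp add: xs_def)
    have "take j es = take (i + (j - i)) es" using ij by simp
    then have takej: "take j es = xs @ ys" unfolding xs_def ys_def by (simp add: take_add)
    have lenys: "length ys = j - i" using ij False unfolding ys_def by simp
    then have ysne: "ys \<noteq> []" using ij by auto
    have pall: "is_path G u (xs @ ys @ zs)" using less.prems(1) es by simp
    have hi: "hlast u xs = pos i" unfolding pos_def xs_def by simp
    have hj: "hlast (hlast u xs) ys = pos j" unfolding pos_def takej hlast_append by simp
    have p1: "is_path G u xs" and p2: "is_path G (pos i) ys" and p3: "is_path G (pos j) zs"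
      using pall hi hj unfolding is_path_append hlast_append by auto
    have hl: "hlast (pos i) ys = pos i"
      using hi hj ij(3) by simp
    have cyc: "is_cycle G ys" by (rule path_cycle[OF p2 ysne hl])
    have ntys: "\<forall>e\<in>set ys. esrc e \<notin> VT G \<and> etgt e \<notin> VT G" using less.prems(2) es by auto
    have cw: "sum_list (map (wt G) ys) \<le> -1"
      using neg cyc ntys unfolding nontarget_cycles_negative_def cycle_weight_def by fastforce
    have pxz: "is_path G u (xs @ zs)"
      unfolding is_path_append using p1 p3 hi ij(3) by simp
    have ntxz: "\<forall>e\<in>set (xs @ zs). esrc e \<notin> VT G \<and> etgt e \<notin> VT G" using less.prems(2) es by auto
    have "length (xs @ zs) < length es" using es ysne by auto
    then have IH: "int n * sum_list (map (wt G) (xs @ zs)) + int (length (xs @ zs))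
      \<le> int n * int n * Wm + int n"
      using less.hyps[OF _ pxz ntxz] unfolding n_def by blast
    have "int n * sum_list (map (wt G) ys) \<le> int n * (-1)" by (rule mult_left_mono[OF cw]) simp
    moreover have "int (length ys) \<le> int n" using lenys ij by simp
    ultimately show ?thesis using IH unfolding n_def[symmetric] es
      by (simp add: algebra_simps)
  qed
qed


definition Cm :: "('v \<Rightarrow> int) \<Rightarrow> int" where "Cm c = Max (insert 0 ((\<lambda>t. \<bar>c t\<bar>) ` VT G))"

lemma finVT: "finite (VT G)" using VTmin union finVs by (metis finite_subset Un_upper1 subset_trans)

lemma Cm: "t \<in> VT G \<Longrightarrow> \<bar>c t\<bar> \<le> Cm c"
  unfolding Cm_def using finVT by auto

lemma weight_lower:
  assumes pl: "is_play G v p" and k: "esrc (p i) \<in> VT G" "i \<le> K"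
  shows "ereal (of_int (- (int K * Wm + Cm c))) \<le> play_weight G c p"
proof -
  have ex: "\<exists>i. esrc (p i) \<in> VT G" using k by blast
  define k where "k = (LEAST i. esrc (p i) \<in> VT G)"
  have "k \<le> i" unfolding k_def using k by (intro Least_le)
  then have kK: "k \<le> K" using k by simp
  have kv: "esrc (p k) \<in> VT G" unfolding k_def using ex by (rule LeastI_ex)
  have "\<forall>j. - Wm \<le> wt G (p j)" using Wm(1) pl unfolding is_play_def by (metis abs_le_iff minus_le_iff)
  then have "(\<Sum>j<k. - Wm) \<le> (\<Sum>j<k. wt G (p j))" by (intro sum_mono) auto
  then have s: "- (int k * Wm) \<le> (\<Sum>j<k. wt G (p j))" by simp
  have "int k * Wm \<le> int K * Wm" using kK Wm(2) by (simp add: mult_right_mono)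
  moreover have "- Cm c \<le> c (esrc (p k))" using Cm[OF kv, where c=c] by simp
  ultimately have "- (int K * Wm + Cm c) \<le> (\<Sum>j<k. wt G (p j)) + c (esrc (p k))" using s by linarith
  moreover have "play_weight G c p = ereal (of_int ((\<Sum>j<k. wt G (p j)) + c (esrc (p k))))"
    unfolding play_weight_def Let_def k_def[symmetric] using ex by simp
  ultimately show ?thesis by (simp only: ereal_less_eq of_int_le_iff)
qed

lemma value_R:
  assumes v: "v \<in> R"
  shows "game_value G c v \<noteq> -\<infinity>"
proof -
  define K where "K = Max (rk ` Vs G)"
  have vV: "v \<in> Vs G" using v R_def by auto
  have rkK: "rk v \<le> K" unfolding K_def using vV finVs by simp
  have "ereal (of_int (- (int K * Wm + Cm c))) \<le> game_value G c v"
    unfolding game_value_def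
  proof (rule INF_greatest)
    fix sm assume sm: "sm \<in> {s. valid_strategy G (VMin G) s}"
    then have smv: "valid_strategy G (VMin G) sm" by simp
    note op = outcome_props[OF smv sig_valid vV]
    obtain i where "i \<le> rk v" "esrc (outcome G sm sig v i) \<in> VT G"
      using rank_play[OF op(1) v] op(3) unfolding sig_def by auto
    then have "ereal (of_int (- (int K * Wm + Cm c))) \<le> play_weight G c (outcome G sm sig v)"
      using weight_lower[OF op(1)] rkK by (meson order_trans)
    then show "ereal (of_int (- (int K * Wm + Cm c))) \<le> (SUP sM\<in>{s. valid_strategy G (VMax G) s}. play_weight G c (outcome G sm sM v))"
      using sig_valid by (intro SUP_upper2[of sig]) auto
  qed
  then show ?thesis by auto
qed

definition comp where "comp S n = (\<lambda>(v0, es). if length es < n then trl (hlast v0 es)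
     else S (hlast v0 (take n es)) (hlast v0 (take n es), drop n es))"

lemma comp_valid: assumes "\<forall>w\<in>Vs G. valid_strategy G (VMin G) (S w)"
  shows "valid_strategy G (VMin G) (comp S n)"
  unfolding valid_strategy_def
proof (intro allI impI)
  fix v0 es assume pe: "is_path G v0 es" and h: "hlast v0 es \<in> VMin G"
  show "\<exists>v'. (hlast v0 es, comp S n (v0, es), v') \<in> Edges G"
  proof (cases "length es < n")
    case True then show ?thesis using trl_ok[OF h] by (auto simp: comp_def)
  next
    case False
    define w where "w = hlast v0 (take n es)"
    have "is_path G v0 (take n es @ drop n es)" using pe by simp
    then have p1: "is_path G v0 (take n es)" and p2: "is_path G w (drop n es)"
      unfolding is_path_append w_def by auto
    have wV: "w \<in> Vs G" using is_path_hlast[OF p1] w_def by simp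
    have hl: "hlast w (drop n es) = hlast v0 es"
      by (simp add: w_def hlast_append[symmetric])
    from assms wV have "valid_strategy G (VMin G) (S w)" by blast
    then have "\<exists>v'. (hlast w (drop n es), S w (w, drop n es), v') \<in> Edges G"
      using valid_strategy_def[THEN iffD1, rule_format, OF _ p2] h hl by simp
    then show ?thesis using False hl by (simp add: comp_def w_def)
  qed
qed

lemma comp_bound:
  assumes neg: "nontarget_cycles_negative G"
    and SV: "\<forall>w\<in>Vs G. valid_strategy G (VMin G) (S w)"
    and SB: "\<forall>w\<in>Vs G. \<forall>sM. valid_strategy G (VMax G) sM \<longrightarrow>
               play_weight G c (outcome G (S w) sM w) \<le> ereal (of_int M)"
    and v: "v \<in> T" and sM: "valid_strategy G (VMax G) sM"
  shows "\<exists>P. int (card (Vs G)) * P + int n \<le> int (card (Vs G)) * int (card (Vs G)) * Wm + int (card (Vs G))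
           \<and> play_weight G c (outcome G (comp S n) sM v) \<le> ereal (of_int (P + M))"
proof -
  have vV: "v \<in> Vs G" using v T_def by auto
  let ?p = "outcome G (comp S n) sM v"
  note op = outcome_props[OF comp_valid[OF SV] sM vV]
  have cf: "\<forall>i<n. esrc (?p i) \<in> VMin G \<longrightarrow> elet (?p i) = trl (esrc (?p i))"
    using op(2) play_hlast[OF op(1)] unfolding conforms_def comp_def by auto
  have inT: "\<And>i. i \<le> n \<Longrightarrow> esrc (?p i) \<in> T" using trap_play[OF op(1) v cf] by blast
  have ntVT: "\<forall>i<n. esrc (?p i) \<notin> VT G" using inT T_VT by auto
  define \<rho> where "\<rho> = map ?p [0..<n]"
  define u where "u = esrc (?p n)"
  define q where "q = (\<lambda>i. ?p (i+n))"
  have len\<rho>: "length \<rho> = n" by (simp add: \<rho>_def)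
  have uT: "u \<in> T" using inT u_def by simp
  hence uV: "u \<in> Vs G" using T_def by auto
  have hu: "hlast v \<rho> = u" using play_hlast[OF op(1)] \<rho>_def u_def by simp
  have path\<rho>: "is_path G v \<rho>"
    using outcome_path[OF comp_valid[OF SV] sM vV, of n] by (simp add: out_prefix_map \<rho>_def)
  have split: "map ?p [0..<i+n] = \<rho> @ map q [0..<i]" for i
    unfolding \<rho>_def q_def by (rule nth_equalityI) (auto simp: nth_append)
  define sM' where "sM' = (\<lambda>(x, es'). if x = u then sM (v, \<rho> @ es') else sig (x, es'))"
  have sM'_valid: "valid_strategy G (VMax G) sM'"
    unfolding valid_strategy_def
  proof (intro allI impI)
    fix x0 es assume pe: "is_path G x0 es" and h: "hlast x0 es \<in> VMax G"
    show "\<exists>v'. (hlast x0 es, sM' (x0, es), v') \<in> Edges G"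
    proof (cases "x0 = u")
      case True
      have "is_path G v (\<rho> @ es)" using path\<rho> pe True hu by (simp add: is_path_append)
      moreover have "hlast v (\<rho> @ es) = hlast x0 es" using hu True by (simp add: hlast_append)
      ultimately have "\<exists>v'. (hlast x0 es, sM (v, \<rho> @ es), v') \<in> Edges G"
        using valid_strategy_def[THEN iffD1, rule_format, OF sM] h by metis
      then show ?thesis using True unfolding sM'_def by simp
    next
      case False
      then show ?thesis using sig_valid pe h unfolding valid_strategy_def sM'_def by auto
    qed
  qed
  have qeq: "q = outcome G (S u) sM' u"
  proof (rule outcome_unique)
    show "is_play G u q" using op(1) unfolding is_play_def q_def u_def by auto
    show "conforms (VMin G) (S u) u q"
      unfolding conforms_def
    proof (intro allI impI)
      fix i assume "esrc (q i) \<in> VMin G"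
      then have "elet (q i) = comp S n (v, map ?p [0..<i+n])" using op(2) unfolding conforms_def q_def by simp
      also have "\<dots> = comp S n (v, \<rho> @ map q [0..<i])" by (simp only: split)
      also have "\<dots> = S u (u, map q [0..<i])" using hu len\<rho> by (simp add: comp_def)
      finally show "elet (q i) = S u (u, map q [0..<i])" .
    qed
    show "conforms (VMax G) sM' u q"
      unfolding conforms_def
    proof (intro allI impI)
      fix i assume "esrc (q i) \<in> VMax G"
      then have "elet (q i) = sM (v, map ?p [0..<i+n])" using op(3) unfolding conforms_def q_def by simp
      also have "\<dots> = sM (v, \<rho> @ map q [0..<i])" by (simp only: split)
      also have "\<dots> = sM' (u, map q [0..<i])" unfolding sM'_def by simp
      finally show "elet (q i) = sM' (u, map q [0..<i])" .
    qed
  qed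
  have "play_weight G c (outcome G (S u) sM' u) \<le> ereal (of_int M)" using SB uV sM'_valid by blast
  then have pwq: "play_weight G c q \<le> ereal (of_int M)" using qeq by simp
  define P where "P = (\<Sum>i<n. wt G (?p i))"
  have P_eq: "P = sum_list (map (wt G) \<rho>)"
    unfolding P_def \<rho>_def by (simp add: interv_sum_list_conv_sum_set_nat atLeast0LessThan)
  have nt: "\<forall>e\<in>set \<rho>. esrc e \<notin> VT G \<and> etgt e \<notin> VT G"
  proof
    fix e assume "e \<in> set \<rho>"
    then obtain i where i: "i < n" "e = ?p i" unfolding \<rho>_def by auto
    have "etgt (?p i) = esrc (?p (Suc i))" using op(1) by (simp add: is_play_def)
    then show "esrc e \<notin> VT G \<and> etgt e \<notin> VT G" using inT[of i] inT[of "Suc i"] i T_VT by auto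
  qed
  have bound: "int (card (Vs G)) * P + int n \<le> int (card (Vs G)) * int (card (Vs G)) * Wm + int (card (Vs G))"
    using path_weight[OF neg path\<rho> nt] P_eq len\<rho> by simp
  have "play_weight G c ?p = ereal (of_int P) + play_weight G c q"
    using pw_shift[OF ntVT] unfolding P_def q_def by simp
  also have "\<dots> \<le> ereal (of_int P) + ereal (of_int M)" using pwq by (rule add_left_mono)
  also have "\<dots> = ereal (of_int (P + M))" by simp
  finally show ?thesis using bound by blast
qed

end

theorem proposition3:
  fixes G :: "('v, 'a) wgame" and c :: "'v \<Rightarrow> int"
  assumes "finite_wgame G"
    and "nontarget_strongly_connected G"
    and "nontarget_cycles_negative G"
    and "\<forall>v\<in>Vs G. game_value G c v \<noteq> \<infinity>"
  shows "\<forall>v\<in>Vs G - VT G. game_value G c v = -\<infinity> \<longleftrightarrow> v \<notin> max_attractor G"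
proof -
  interpret wg G by unfold_locales (rule assms(1))
  have S_ex: "\<forall>w\<in>Vs G. \<exists>sm. valid_strategy G (VMin G) sm \<and> (\<exists>B::int. \<forall>sM. valid_strategy G (VMax G) sM \<longrightarrow>
      play_weight G c (outcome G sm sM w) \<le> ereal (of_int B))"
  proof
    fix w assume w: "w \<in> Vs G"
    have "game_value G c w < \<infinity>" using assms(4) w by (simp add: less_top[symmetric])
    then obtain sm where sm: "valid_strategy G (VMin G) sm"
      and lt: "(SUP sM\<in>{s. valid_strategy G (VMax G) s}. play_weight G c (outcome G sm sM w)) < \<infinity>"
      unfolding game_value_def INF_less_iff by blast
    then obtain N :: nat where N: "(SUP sM\<in>{s. valid_strategy G (VMax G) s}. play_weight G c (outcome G sm sM w)) < ereal (real N)"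
      using less_PInf_Ex_of_nat by (metis less_irrefl)
    have "\<forall>sM. valid_strategy G (VMax G) sM \<longrightarrow> play_weight G c (outcome G sm sM w) \<le> ereal (of_int (int N))"
    proof (intro allI impI)
      fix sM assume "valid_strategy G (VMax G) sM"
      then have "play_weight G c (outcome G sm sM w) \<le> (SUP sM\<in>{s. valid_strategy G (VMax G) s}. play_weight G c (outcome G sm sM w))"
        by (intro SUP_upper) simp
      then show "play_weight G c (outcome G sm sM w) \<le> ereal (of_int (int N))" using N by simp
    qed
    then show "\<exists>sm. valid_strategy G (VMin G) sm \<and> (\<exists>B::int. \<forall>sM. valid_strategy G (VMax G) sM \<longrightarrow>
      play_weight G c (outcome G sm sM w) \<le> ereal (of_int B))" using sm by blast
  qed
  then obtain S where S: "\<forall>w\<in>Vs G. valid_strategy G (VMin G) (S w) \<and> (\<exists>B::int. \<forall>sM. valid_strategy G (VMax G) sM \<longrightarrow>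
      play_weight G c (outcome G (S w) sM w) \<le> ereal (of_int B))"
    by (rule bchoice[THEN exE]) blast
  then obtain B where B: "\<forall>w\<in>Vs G. \<forall>sM. valid_strategy G (VMax G) sM \<longrightarrow>
      play_weight G c (outcome G (S w) sM w) \<le> ereal (of_int (B w))"
    by (metis (no_types, lifting) bchoice)
  define M where "M = Max (insert 0 (B ` Vs G))"
  have BM: "w \<in> Vs G \<Longrightarrow> B w \<le> M" for w unfolding M_def using finVs by simp
  have SV: "\<forall>w\<in>Vs G. valid_strategy G (VMin G) (S w)" using S by blast
  have SB: "\<forall>w\<in>Vs G. \<forall>sM. valid_strategy G (VMax G) sM \<longrightarrow>
               play_weight G c (outcome G (S w) sM w) \<le> ereal (of_int M)"
  proof (intro ballI allI impI)
    fix w sM assume "w \<in> Vs G" "valid_strategy G (VMax G) sM"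
    then show "play_weight G c (outcome G (S w) sM w) \<le> ereal (of_int M)"
      using B BM[of w] by (meson ereal_less_eq(3) of_int_le_iff order_trans)
  qed
  show ?thesis
  proof (intro ballI iffI)
    fix v assume v: "v \<in> Vs G - VT G" and "game_value G c v = -\<infinity>"
    then show "v \<notin> max_attractor G" using value_R attractor_R by auto
  next
    fix v assume v: "v \<in> Vs G - VT G" and na: "v \<notin> max_attractor G"
    then have vT: "v \<in> T" unfolding T_def using attractor_R by auto
    define N where "N = int (card (Vs G))"
    have Npos: "N > 0" using v finVs unfolding N_def by (auto simp: card_gt_0_iff)
    show "game_value G c v = -\<infinity>"
    proof (rule ereal_bot)
      fix r :: real
      define m where "m = nat \<lceil>real_of_int (N * Wm + 1 + M) - r\<rceil>"
      have mr: "real_of_int (N * Wm + 1 + M) - r \<le> real m" unfolding m_def by (rule real_nat_ceiling_ge)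
      define n where "n = nat N * m"
      have nN: "int n = N * int m" unfolding n_def using Npos by simp
      have "game_value G c v \<le> (SUP sM\<in>{s. valid_strategy G (VMax G) s}. play_weight G c (outcome G (comp S n) sM v))"
        unfolding game_value_def using comp_valid[OF SV] by (intro INF_lower) simp
      also have "\<dots> \<le> ereal r"
      proof (rule SUP_least)
        fix sM assume "sM \<in> {s. valid_strategy G (VMax G) s}"
        then obtain P where P1: "N * P + int n \<le> N * N * Wm + N"
          and P2: "play_weight G c (outcome G (comp S n) sM v) \<le> ereal (of_int (P + M))"
          using comp_bound[OF assms(3) SV SB vT] unfolding N_def by blast
        have "N * P \<le> N * (N * Wm + 1 - int m)" using P1 nN by (simp add: algebra_simps)
        then have "P \<le> N * Wm + 1 - int m" using Npos by (simp add: mult_le_cancel_left_pos)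
        then have "real_of_int (P + M) \<le> r" using mr by linarith
        then show "play_weight G c (outcome G (comp S n) sM v) \<le> ereal r"
          using P2 by (meson ereal_less_eq(3) order_trans)
      qed
      finally show "game_value G c v \<le> ereal r" .
    qed
  qed
qed

end
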